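(* Let $\mathcal P_X$ and $\mathcal P_Y$ be probability measures on a common measurable space $(E,\mathcal E)$ with $\mathcal P_Y\ll\mathcal P_X$, and let $L=d\mathcal P_Y/d\mathcal P_X$ be the Radon–Nikodym derivative. Assume that $L(\mathbf Z)$ has a continuous distribution when $\mathbf Z\sim\mathcal P_X$. Let $\mathbf Z_X\sim\mathcal P_X$ and $\mathbf Z_Y\sim\mathcal P_Y$ be independent. Then $$\tfrac12\, d_{tv}(\mathcal P_X,\mathcal P_Y)\;\le\;\mathbb P\big(L(\mathbf Z_X)<L(\mathbf Z_Y)\big)-\tfrac12\;\le\; d_{tv}(\mathcal P_X,\mathcal P_Y).$$
   Context: $d_{tv}(\mathcal P_X,\mathcal P_Y)=\sup_{A\in\mathcal E}|\mathcal P_Y(A)-\mathcal P_X(A)|$ denotes the total variation distance. *)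

theory Defs
  imports "HOL-Probability.Probability"
begin

definition tv_dist :: "'a measure \<Rightarrow> 'a measure \<Rightarrow> real" where
  "tv_dist PX PY = (SUP A \<in> sets PX. \<bar>measure PY A - measure PX A\<bar>)"

end

theory Submission
  imports Defs
begin

lemma prod_int:
  fixes g h :: "'a \<Rightarrow> real"
  assumes P: "prob_space M" and g: "integrable M g" and h: "integrable M h"
  shows "integrable (M \<Otimes>\<^sub>M M) (\<lambda>z. g (fst z) * h (snd z))"
    and "(\<integral>z. g (fst z) * h (snd z) \<partial>(M \<Otimes>\<^sub>M M)) = integral\<^sup>L M g * integral\<^sup>L M h"
proof -
  interpret prob_space M by fact
  interpret pair_prob_space M M by unfold_locales
  have [measurable]: "g \<in> borel_measurable M" "h \<in> borel_measurable M" using g h by auto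
  have I: "integrable (M \<Otimes>\<^sub>M M) (\<lambda>(x,y). g x * h y)"
  proof (rule Fubini_integrable)
    show "(\<lambda>(x,y). g x * h y) \<in> borel_measurable (M \<Otimes>\<^sub>M M)" by measurable
    have "(\<lambda>x. \<integral>y. norm (case (x, y) of (x, y) \<Rightarrow> g x * h y) \<partial>M) = (\<lambda>x. \<bar>g x\<bar> * (\<integral>y. \<bar>h y\<bar> \<partial>M))"
      by (simp add: abs_mult)
    then show "integrable M (\<lambda>x. \<integral>y. norm (case (x, y) of (x, y) \<Rightarrow> g x * h y) \<partial>M)"
      using g by simp
    show "AE x in M. integrable M (\<lambda>y. case (x, y) of (x, y) \<Rightarrow> g x * h y)"
      using h by simp
  qed
  then show "integrable (M \<Otimes>\<^sub>M M) (\<lambda>z. g (fst z) * h (snd z))"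
    by (simp add: split_beta')
  have "(\<integral>x. (\<integral>y. g x * h y \<partial>M) \<partial>M) = integral\<^sup>L (M \<Otimes>\<^sub>M M) (\<lambda>(x, y). g x * h y)"
    by (rule integral_fst) (use I in simp)
  moreover have "(\<integral>x. (\<integral>y. g x * h y \<partial>M) \<partial>M) = integral\<^sup>L M g * integral\<^sup>L M h"
    by simp
  ultimately show "(\<integral>z. g (fst z) * h (snd z) \<partial>(M \<Otimes>\<^sub>M M)) = integral\<^sup>L M g * integral\<^sup>L M h"
    by (simp add: split_beta')
qed


theorem proposition1:
  fixes PX PY :: "'a measure"
  assumes "prob_space PX" and "prob_space PY"
    and "sets PY = sets PX"
    and "absolutely_continuous PX PY"
    and "\<And>t. measure PX {x \<in> space PX. RN_deriv PX PY x = t} = 0"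
  shows "tv_dist PX PY / 2
           \<le> measure (PX \<Otimes>\<^sub>M PY)
               {z \<in> space (PX \<Otimes>\<^sub>M PY). RN_deriv PX PY (fst z) < RN_deriv PX PY (snd z)} - 1/2
       \<and> measure (PX \<Otimes>\<^sub>M PY)
               {z \<in> space (PX \<Otimes>\<^sub>M PY). RN_deriv PX PY (fst z) < RN_deriv PX PY (snd z)} - 1/2
           \<le> tv_dist PX PY"
proof -
  interpret X: prob_space PX by fact
  interpret Y: prob_space PY by fact
  interpret XX: pair_prob_space PX PX by unfold_locales
  interpret XY: pair_prob_space PX PY by unfold_locales
  note sets_eq = assms(3)
  have space_eq: "space PY = space PX" using sets_eq_imp_space_eq[OF sets_eq] .
  define L where "L = RN_deriv PX PY"
  define l where "l = (\<lambda>x. enn2real (L x))"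
  have Lm[measurable]: "L \<in> borel_measurable PX" unfolding L_def by simp
  have lm[measurable]: "l \<in> borel_measurable PX" unfolding l_def by measurable
  have l_nn: "\<And>x. 0 \<le> l x" unfolding l_def by simp
  have finL: "AE x in PX. L x \<noteq> \<infinity>"
    unfolding L_def using X.RN_deriv_finite[OF _ assms(4) sets_eq] Y.sigma_finite_measure_axioms by blast
  have PYd: "PY = density PX (\<lambda>x. ennreal (l x))"
  proof -
    have "PY = density PX L" unfolding L_def using X.density_RN_deriv[OF assms(4) sets_eq] by simp
    also have "\<dots> = density PX (\<lambda>x. ennreal (l x))"
      by (rule density_cong) (use finL in \<open>auto simp: l_def less_top\<close>)
    finally show ?thesis .
  qed
  have l_int: "integrable PX l"
  proof -
    have "integrable PY (\<lambda>_. 1::real)" by simp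
    then have "integrable (density PX (\<lambda>x. ennreal (l x))) (\<lambda>_. 1::real)" using PYd by simp
    then show ?thesis by (subst (asm) integrable_density) (auto simp: l_nn)
  qed
  have l_1: "integral\<^sup>L PX l = 1"
  proof -
    have "1 = integral\<^sup>L PY (\<lambda>_. 1::real)" by (simp add: Y.prob_space)
    also have "\<dots> = integral\<^sup>L (density PX (\<lambda>x. ennreal (l x))) (\<lambda>_. 1::real)" using PYd by simp
    also have "\<dots> = integral\<^sup>L PX l" by (subst integral_density) (auto simp: l_nn)
    finally show ?thesis by simp
  qed
  have PYA: "measure PY A = (\<integral>x. l x * indicator A x \<partial>PX)" if A: "A \<in> sets PX" for A
  proof -
    have "measure PY A = integral\<^sup>L PY (indicator A)" using A sets_eq space_eq
      by (simp add: Int_absorb2 sets.sets_into_space)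
    also have "\<dots> = integral\<^sup>L (density PX (\<lambda>x. ennreal (l x))) (indicator A)" using PYd by simp
    also have "\<dots> = (\<integral>x. l x * indicator A x \<partial>PX)" using A by (subst integral_density) (auto simp: l_nn)
    finally show ?thesis .
  qed

  define d where "d = (\<integral>x. max 0 (l x - 1) \<partial>PX)"
  have im1: "integrable PX (\<lambda>x. max 0 (l x - 1))"
    by (rule Bochner_Integration.integrable_bound[of _ "\<lambda>x. l x + 1"]) (use l_int l_nn in auto)
  have im2: "integrable PX (\<lambda>x. max 0 (1 - l x))"
    by (rule Bochner_Integration.integrable_bound[of _ "\<lambda>x. l x + 1"]) (use l_int l_nn in auto)
  have d_nn: "0 \<le> d" unfolding d_def by (rule Bochner_Integration.integral_nonneg) auto
  have d2: "(\<integral>x. max 0 (1 - l x) \<partial>PX) = d"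
  proof -
    have "(\<integral>x. max 0 (1 - l x) \<partial>PX) = (\<integral>x. max 0 (l x - 1) - l x + 1 \<partial>PX)"
      by (rule Bochner_Integration.integral_cong) auto
    also have "\<dots> = d - 1 + 1" unfolding d_def using im1 l_int l_1
      by (simp add: X.prob_space)
    finally show ?thesis by simp
  qed
  have diffA: "measure PY A - measure PX A = (\<integral>x. (l x - 1) * indicator A x \<partial>PX)"
    if A: "A \<in> sets PX" for A
  proof -
    have iA: "integrable PX (\<lambda>x. l x * indicator A x)"
      by (rule Bochner_Integration.integrable_bound[of _ "l"]) (use l_int l_nn A in \<open>auto simp: indicator_def\<close>)
    have "measure PX A = integral\<^sup>L PX (indicator A)" using A
      by (simp add: Int_absorb2 sets.sets_into_space)
    then have "measure PY A - measure PX A = (\<integral>x. l x * indicator A x \<partial>PX) - integral\<^sup>L PX (indicator A)"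
      using PYA[OF A] by simp
    also have "\<dots> = (\<integral>x. l x * indicator A x - indicator A x \<partial>PX)"
      using iA A by (subst Bochner_Integration.integral_diff) (auto simp: integrable_indicator_iff less_top[symmetric])
    also have "\<dots> = (\<integral>x. (l x - 1) * indicator A x \<partial>PX)"
      by (rule Bochner_Integration.integral_cong) (auto simp: algebra_simps)
    finally show ?thesis .
  qed
  have boundA: "\<bar>measure PY A - measure PX A\<bar> \<le> d" if A: "A \<in> sets PX" for A
  proof -
    have iA: "integrable PX (\<lambda>x. (l x - 1) * indicator A x)"
      by (rule Bochner_Integration.integrable_bound[of _ "\<lambda>x. l x + 1"]) (use l_int l_nn A in \<open>auto simp: indicator_def abs_le_iff intro!: AE_I2\<close>)
    have "(\<integral>x. (l x - 1) * indicator A x \<partial>PX) \<le> d" unfolding d_def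
      by (rule Bochner_Integration.integral_mono[OF iA im1]) (auto simp: indicator_def)
    moreover have "- d \<le> (\<integral>x. (l x - 1) * indicator A x \<partial>PX)"
    proof -
      have "(\<integral>x. - max 0 (1 - l x) \<partial>PX) \<le> (\<integral>x. (l x - 1) * indicator A x \<partial>PX)"
        by (rule Bochner_Integration.integral_mono[OF _ iA]) (use im2 in \<open>auto simp: indicator_def\<close>)
      then show ?thesis using d2 by simp
    qed
    ultimately show ?thesis using diffA[OF A] by linarith
  qed
  have tv: "tv_dist PX PY = d"
  proof -
    define A0 where "A0 = {x \<in> space PX. 1 < l x}"
    have A0: "A0 \<in> sets PX" unfolding A0_def by measurable
    have "measure PY A0 - measure PX A0 = d"
      unfolding diffA[OF A0] d_def by (rule Bochner_Integration.integral_cong) (auto simp: A0_def indicator_def)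
    then have eq: "\<bar>measure PY A0 - measure PX A0\<bar> = d" using d_nn by simp
    have bdd: "bdd_above ((\<lambda>A. \<bar>measure PY A - measure PX A\<bar>) ` sets PX)"
      by (rule bdd_aboveI2[where M=d]) (use boundA in auto)
    show ?thesis unfolding tv_dist_def
    proof (rule antisym)
      show "(SUP A\<in>sets PX. \<bar>measure PY A - measure PX A\<bar>) \<le> d"
        by (rule cSUP_least) (use boundA sets.empty_sets in auto)
      show "d \<le> (SUP A\<in>sets PX. \<bar>measure PY A - measure PX A\<bar>)"
        using cSUP_upper[OF A0 bdd] eq by simp
    qed
  qed

  define S where "S = {z \<in> space (PX \<Otimes>\<^sub>M PY). L (fst z) < L (snd z)}"
  have sp2: "space (PX \<Otimes>\<^sub>M PY) = space (PX \<Otimes>\<^sub>M PX)" by (simp add: space_pair_measure space_eq)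
  have sets2: "sets (PX \<Otimes>\<^sub>M PY) = sets (PX \<Otimes>\<^sub>M PX)" by (rule sets_pair_measure_cong) (auto simp: sets_eq)
  have S_sets: "S \<in> sets (PX \<Otimes>\<^sub>M PX)" unfolding S_def sp2 by measurable
  have PXY: "PX \<Otimes>\<^sub>M PY = density (PX \<Otimes>\<^sub>M PX) (\<lambda>z. ennreal (l (snd z)))"
  proof -
    have "density PX (\<lambda>_. 1) \<Otimes>\<^sub>M density PX (\<lambda>x. ennreal (l x))
          = density (PX \<Otimes>\<^sub>M PX) (\<lambda>(x,y). 1 * ennreal (l y))"
      by (rule pair_measure_density) (use PYd Y.sigma_finite_measure_axioms X.sigma_finite_measure_axioms in auto)
    then show ?thesis by (simp add: density_1 PYd[symmetric] split_beta')
  qed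
  define a where "a = (\<lambda>z::'a\<times>'a. l (fst z))"
  define b where "b = (\<lambda>z::'a\<times>'a. l (snd z))"
  have am[measurable]: "a \<in> borel_measurable (PX \<Otimes>\<^sub>M PX)" unfolding a_def by measurable
  have bm[measurable]: "b \<in> borel_measurable (PX \<Otimes>\<^sub>M PX)" unfolding b_def by measurable
  have a_nn: "\<And>z. 0 \<le> a z" and b_nn: "\<And>z. 0 \<le> b z" unfolding a_def b_def by (auto simp: l_nn)
  have one_int: "integrable PX (\<lambda>_. 1::real)" by simp
  have ib: "integrable (PX \<Otimes>\<^sub>M PX) b" and b1: "integral\<^sup>L (PX \<Otimes>\<^sub>M PX) b = 1"
    using prod_int[OF assms(1) one_int l_int] l_1 by (simp_all add: b_def X.prob_space)
  have ia: "integrable (PX \<Otimes>\<^sub>M PX) a" and a1: "integral\<^sup>L (PX \<Otimes>\<^sub>M PX) a = 1"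
    using prod_int[OF assms(1) l_int one_int] l_1 by (simp_all add: a_def X.prob_space)
  have aeF: "AE z in PX \<Otimes>\<^sub>M PX. L (fst z) \<noteq> \<infinity>"
    by (rule XX.AE_pair_measure) (use finL in \<open>auto\<close>)
  define P where "P = (\<integral>z. of_bool (a z < b z) * b z \<partial>(PX \<Otimes>\<^sub>M PX))"
  define Q where "Q = (\<integral>z. of_bool (b z < a z) * b z \<partial>(PX \<Otimes>\<^sub>M PX))"
  define Q' where "Q' = (\<integral>z. of_bool (a z < b z) * a z \<partial>(PX \<Otimes>\<^sub>M PX))"
  define E where "E = (\<integral>z. of_bool (a z = b z) * b z \<partial>(PX \<Otimes>\<^sub>M PX))"
  have iP: "integrable (PX \<Otimes>\<^sub>M PX) (\<lambda>z. of_bool (a z < b z) * b z)"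
    by (rule Bochner_Integration.integrable_bound[OF ib]) (auto simp: b_nn intro!: AE_I2)
  have iQ: "integrable (PX \<Otimes>\<^sub>M PX) (\<lambda>z. of_bool (b z < a z) * b z)"
    by (rule Bochner_Integration.integrable_bound[OF ib]) (auto simp: b_nn intro!: AE_I2)
  have iQ': "integrable (PX \<Otimes>\<^sub>M PX) (\<lambda>z. of_bool (a z < b z) * a z)"
    by (rule Bochner_Integration.integrable_bound[OF ia]) (auto simp: a_nn intro!: AE_I2)
  have iE: "integrable (PX \<Otimes>\<^sub>M PX) (\<lambda>z. of_bool (a z = b z) * b z)"
    by (rule Bochner_Integration.integrable_bound[OF ib]) (auto simp: b_nn intro!: AE_I2)
  have p_eq: "measure (PX \<Otimes>\<^sub>M PY) S = P"
  proof -
    have "measure (PX \<Otimes>\<^sub>M PY) S = integral\<^sup>L (PX \<Otimes>\<^sub>M PY) (indicator S)"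
      using S_sets sets.sets_into_space[OF S_sets] sp2 by (simp add: Int_absorb2)
    also have "\<dots> = integral\<^sup>L (density (PX \<Otimes>\<^sub>M PX) (\<lambda>z. ennreal (l (snd z)))) (indicator S)"
      using PXY by simp
    also have "\<dots> = (\<integral>z. l (snd z) * indicator S z \<partial>(PX \<Otimes>\<^sub>M PX))"
      using S_sets by (subst integral_density) (auto simp: l_nn)
    also have "\<dots> = P" unfolding P_def
    proof (rule integral_cong_AE)
      show "(\<lambda>z. l (snd z) * indicator S z) \<in> borel_measurable (PX \<Otimes>\<^sub>M PX)"
        using S_sets by measurable
      show "(\<lambda>z. of_bool (a z < b z) * b z) \<in> borel_measurable (PX \<Otimes>\<^sub>M PX)" by measurable
      show "AE z in PX \<Otimes>\<^sub>M PX. l (snd z) * indicator S z = of_bool (a z < b z) * b z"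
        using aeF
      proof (rule AE_mp, intro AE_I2 impI)
        fix z assume z: "z \<in> space (PX \<Otimes>\<^sub>M PX)" and f: "L (fst z) \<noteq> \<infinity>"
        show "l (snd z) * indicator S z = of_bool (a z < b z) * b z"
        proof (cases "L (snd z) = \<infinity>")
          case True then show ?thesis by (simp add: l_def b_def)
        next
          case False
          have e1: "L (fst z) = ennreal (a z)" using f by (simp add: a_def l_def less_top)
          have e2: "L (snd z) = ennreal (b z)" using False by (simp add: b_def l_def less_top)
          have "z \<in> S \<longleftrightarrow> a z < b z" using z sp2 a_nn b_nn unfolding S_def e1 e2
            by (auto simp: ennreal_less_iff e1 e2)
          then show ?thesis by (simp add: b_def indicator_def)
        qed
      qed
    qed
    finally show ?thesis .
  qed
  have QQ': "Q = Q'"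
  proof -
    have "(\<integral>(x,y). of_bool (l (fst (y,x)) < l (snd (y,x))) * l (fst (y,x)) \<partial>(PX \<Otimes>\<^sub>M PX))
        = (\<integral>z. of_bool (l (fst z) < l (snd z)) * l (fst z) \<partial>(PX \<Otimes>\<^sub>M PX))"
      by (rule XX.integral_product_swap) measurable
    then show ?thesis unfolding Q_def Q'_def a_def b_def by (simp add: split_beta')
  qed
  have zero: "measure PX {x \<in> space PX. l x = c} = 0" for c
  proof -
    have "measure PX {x \<in> space PX. l x = c}
        \<le> measure PX ({x \<in> space PX. L x = ennreal c} \<union> {x \<in> space PX. L x = \<infinity>})"
      by (rule X.finite_measure_mono) (auto simp: l_def less_top)
    also have "\<dots> \<le> measure PX {x \<in> space PX. L x = ennreal c} + measure PX {x \<in> space PX. L x = \<infinity>}"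
      by (rule measure_subadditive) (auto simp: X.emeasure_finite)
    also have "\<dots> = 0" using assms(5) unfolding L_def by simp
    finally show ?thesis by (simp add: measure_nonneg antisym)
  qed
  have E0: "E = 0"
  proof -
    have I: "integrable (PX \<Otimes>\<^sub>M PX) (\<lambda>(x,y). of_bool (l x = l y) * l y)"
      using iE unfolding a_def b_def by (simp add: split_beta')
    have inner: "(\<integral>x. of_bool (l x = l y) * l y \<partial>PX) = 0" for y
    proof -
      have "(\<integral>x. of_bool (l x = l y) * l y \<partial>PX) = (\<integral>x. indicator {x \<in> space PX. l x = l y} x * l y \<partial>PX)"
        by (rule Bochner_Integration.integral_cong) (auto simp: indicator_def)
      also have "\<dots> = measure PX {x \<in> space PX. l x = l y} * l y" by simp
      finally show ?thesis using zero by simp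
    qed
    have "integral\<^sup>L (PX \<Otimes>\<^sub>M PX) (\<lambda>(x,y). of_bool (l x = l y) * l y) = (\<integral>y. (\<integral>x. of_bool (l x = l y) * l y \<partial>PX) \<partial>PX)"
      by (rule XX.integral_snd[symmetric]) (use I in simp)
    also have "\<dots> = (\<integral>y. 0 \<partial>PX)" by (simp only: inner)
    also have "\<dots> = 0" by simp
    finally show ?thesis unfolding E_def a_def b_def by (simp add: split_beta')
  qed
  have PQ1: "P + Q + E = 1"
  proof -
    have "P + Q + E = (\<integral>z. of_bool (a z < b z) * b z + of_bool (b z < a z) * b z + of_bool (a z = b z) * b z \<partial>(PX \<Otimes>\<^sub>M PX))"
      unfolding P_def Q_def E_def using iP iQ iE by (simp add: Bochner_Integration.integral_add)
    also have "\<dots> = integral\<^sup>L (PX \<Otimes>\<^sub>M PX) b"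
      by (rule Bochner_Integration.integral_cong) auto
    finally show ?thesis using b1 by simp
  qed
  define G where "G = (\<integral>z. max 0 (b z - a z) \<partial>(PX \<Otimes>\<^sub>M PX))"
  have PG: "P - Q' = G"
  proof -
    have "P - Q' = (\<integral>z. of_bool (a z < b z) * b z - of_bool (a z < b z) * a z \<partial>(PX \<Otimes>\<^sub>M PX))"
      unfolding P_def Q'_def using iP iQ' by (simp add: Bochner_Integration.integral_diff)
    also have "\<dots> = G" unfolding G_def
      by (rule Bochner_Integration.integral_cong) auto
    finally show ?thesis .
  qed
  have iG: "integrable (PX \<Otimes>\<^sub>M PX) (\<lambda>z. max 0 (b z - a z))"
    by (rule Bochner_Integration.integrable_bound[OF ib]) (auto simp: a_nn b_nn intro!: AE_I2)
  define c1 where "c1 = (\<integral>x. of_bool (1 < l x) * l x \<partial>PX)"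
  define c2 where "c2 = (\<integral>x. (of_bool (1 < l x)::real) \<partial>PX)"
  have ic1: "integrable PX (\<lambda>x. of_bool (1 < l x) * l x)"
    by (rule Bochner_Integration.integrable_bound[OF l_int]) (auto simp: l_nn intro!: AE_I2)
  have ic2: "integrable PX (\<lambda>x. of_bool (1 < l x) :: real)"
    by (rule Bochner_Integration.integrable_bound[OF one_int]) (auto intro!: AE_I2)
  have dc: "d = c1 - c2"
  proof -
    have "d = (\<integral>x. of_bool (1 < l x) * l x - of_bool (1 < l x) \<partial>PX)"
      unfolding d_def by (rule Bochner_Integration.integral_cong) auto
    then show ?thesis unfolding c1_def c2_def using ic1 ic2 by (simp add: Bochner_Integration.integral_diff)
  qed
  have lower: "d \<le> G"
  proof -
    have i1: "integrable (PX \<Otimes>\<^sub>M PX) (\<lambda>z. 1 * (of_bool (1 < l (snd z)) * l (snd z)))"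
      and e1: "(\<integral>z. 1 * (of_bool (1 < l (snd z)) * l (snd z)) \<partial>(PX \<Otimes>\<^sub>M PX)) = 1 * c1"
      using prod_int[OF assms(1) one_int ic1] by (simp_all add: c1_def X.prob_space)
    have i2: "integrable (PX \<Otimes>\<^sub>M PX) (\<lambda>z. l (fst z) * of_bool (1 < l (snd z)))"
      and e2: "(\<integral>z. l (fst z) * of_bool (1 < l (snd z)) \<partial>(PX \<Otimes>\<^sub>M PX)) = 1 * c2"
      using prod_int[OF assms(1) l_int ic2] l_1 by (simp_all add: c2_def)
    have "d = (\<integral>z. 1 * (of_bool (1 < l (snd z)) * l (snd z)) - l (fst z) * of_bool (1 < l (snd z)) \<partial>(PX \<Otimes>\<^sub>M PX))"
      using i1 i2 e1 e2 dc by (simp add: Bochner_Integration.integral_diff del: mult_1)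
    also have "\<dots> \<le> G" unfolding G_def
      by (rule Bochner_Integration.integral_mono) (use i1 i2 iG in \<open>auto simp: a_def b_def\<close>)
    finally show ?thesis .
  qed
  have upper: "G \<le> 2 * d"
  proof -
    have i1: "integrable (PX \<Otimes>\<^sub>M PX) (\<lambda>z. 1 * max 0 (l (snd z) - 1))"
      and e1: "(\<integral>z. 1 * max 0 (l (snd z) - 1) \<partial>(PX \<Otimes>\<^sub>M PX)) = 1 * d"
      using prod_int[OF assms(1) one_int im1] by (simp_all add: d_def X.prob_space)
    have i2: "integrable (PX \<Otimes>\<^sub>M PX) (\<lambda>z. max 0 (1 - l (fst z)) * 1)"
      and e2: "(\<integral>z. max 0 (1 - l (fst z)) * 1 \<partial>(PX \<Otimes>\<^sub>M PX)) = d * 1"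
      using prod_int[OF assms(1) im2 one_int] d2 by (simp_all add: X.prob_space)
    have "G \<le> (\<integral>z. 1 * max 0 (l (snd z) - 1) + max 0 (1 - l (fst z)) * 1 \<partial>(PX \<Otimes>\<^sub>M PX))"
      unfolding G_def
      by (rule Bochner_Integration.integral_mono) (use i1 i2 iG in \<open>auto simp: a_def b_def\<close>)
    also have "\<dots> = 2 * d"
      using i1 i2 e1 e2 by (simp add: Bochner_Integration.integral_add del: mult_1 mult_1_right)
    finally show ?thesis .
  qed
  have "measure (PX \<Otimes>\<^sub>M PY) S - 1/2 = G / 2"
    using p_eq PQ1 E0 QQ' PG by simp
  then show ?thesis using lower upper tv unfolding S_def L_def by simp
qed

end
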